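(* Let $M$ be an $n$-player Dec-POMDP satisfying hierarchical information sharing (HIS), fix a stage $\tau$, an occupancy state $s_\tau$ and a function $\beta_\tau$, and consider the single-stage subgame $G_{s_\tau}^{\beta_\tau}$ and the common-payoff perfect-information extensive-form game $\bar G_{s_\tau}^{\beta_\tau}$ (both defined in the context). Define functions $\beta^{i,*}_\tau$, $i=n,n-1,\dots,1$, on nodes of player $i$ and actions $u^i_\tau\in U^i$ by $$\beta^{n,*}_\tau(\varsigma^n_\tau,u^n_\tau)=R(\varsigma^n_\tau,u^n_\tau),\qquad \beta^{i,*}_\tau(\varsigma^i_\tau,u^i_\tau)=\mathbb{E}_{\varsigma^{i+1}_\tau\sim T(\cdot\mid \varsigma^i_\tau,u^i_\tau)}\Big\{\max_{u^{i+1}_\tau\in U^{i+1}}\beta^{i+1,*}_\tau(\varsigma^{i+1}_\tau,u^{i+1}_\tau)\Big\}\ (i<n).$$ Then: (a) these functions are the optimal action-value functions of $\bar G_{s_\tau}^{\beta_\tau}$ (i.e. they solve Bellman's optimality equations of $\bar G_{s_\tau}^{\beta_\tau}$), and the optimal value of $\bar G_{s_\tau}^{\beta_\tau}$, namely $\mathbb{E}_{\varsigma^1_\tau}\{\max_{u^1_\tau}\beta^{1,*}_\tau(\varsigma^1_\tau,u^1_\tau)\}$ with $\varsigma^1_\tau=(s_\tau,o^1_\tau)$ and $o^1_\tau$ distributed according to the marginal of $s_\tau$, equals the optimal value $\max_{a_\tau}Q_{\beta_\tau}(s_\tau,a_\tau)$ of $G_{s_\tau}^{\beta_\tau}$; (b)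 any optimal solution of $\bar G_{s_\tau}^{\beta_\tau}$ is also an optimal solution of $G_{s_\tau}^{\beta_\tau}$: if $\sigma$ assigns an action to every node so as to maximize the expected payoff of $\bar G_{s_\tau}^{\beta_\tau}$, then the joint decision rule defined recursively for $i=1,\dots,n$ by $a^i_\tau(o^i_\tau)=\sigma(\varsigma^i_\tau)$ with $\varsigma^i_\tau=\langle s_\tau,o^{1:i}_\tau,a^{1:i-1}_\tau(o^{1:i-1}_\tau)\rangle$ maximizes $Q_{\beta_\tau}(s_\tau,\cdot)$; (c) in particular, the greedy decision rules defined recursively for $i=1,\dots,n$ by $$a^{i,*}_\tau(o^i_\tau)\in\arg\max_{u^i_\tau\in U^i}\beta^{i,*}_\tau(\varsigma^i_\tau,u^i_\tau),\qquad \varsigma^i_\tau=\langle s_\tau,o^{1:i}_\tau,a^{1:i-1,*}_\tau(o^{1:i-1}_\tau)\rangle,$$ form a joint decision rule $a^*_\tau=(a^{1,*}_\tau,\dots,a^{n,*}_\tau)$ that is optimal for $G_{s_\tau}^{\beta_\tau}$.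
   Context: An $n$-player Dec-POMDP is $M=\langle n,X,U,Z,p,r,s_0,\gamma,\ell\rangle$: $X$ a finite set of hidden states; $U^i$ a finite action set of player $i$, $U=U^1\times\dots\times U^n$; $Z^i$ a finite observation set of player $i$, $Z=Z^1\times\dots\times Z^n$; $p(y,z\mid x,u)$ the probability of moving from state $x$ to state $y$ and receiving joint observation $z$ after joint action $u$; $r\colon X\times U\to\mathbb{R}$ the reward; $s_0$ an initial distribution on $X$; $\gamma$ a discount factor; $\ell$ the number of stages. The private history of player $i$ at stage $\tau$ is $o^i_\tau=(u^i_{0:\tau-1},z^i_{1:\tau})$ (with $o^i_0=\emptyset$) and the joint history is $o_\tau=(o^1_\tau,\dots,o^n_\tau)$. Hierarchical information sharing (HIS): for every player $i>1$ there is a map $\zeta^i$ with $\zeta^i(z^i_\tau)=(u^{i-1}_{\tau-1},z^{i-1}_\tau)$, so that the private history $o^i_\tau$ of player $i$ determines the private histories $o^{1}_\tau,\dots,o^{i-1}_\tau$ of all players below it (player $n$'s history determines the joint history). A private decision rule $a^i_\tau$ maps private histories $o^i_\tau$ to actions in $U^i$; a joint decision rule is $a_\tau=(a^1_\tau,\dots,a^n_\tau)$ with $a_\tau(o)=(a^1_\tau(o^1),\dots,a^n_\tau(o^n))$; we write $a^{1:i}_\tau(o^{1:i}_\tau)=(a^1_\tau(o^1_\tau),\dots,a^i_\tau(o^i_\tau))$. An occupancy state $s_\tau$ is a probability distribution over pairs $(x,o)$ of a hidden state and a joint $\tau$-step history. Given a function $\beta_\tau\colon(x,o,u)\mapsto\beta_\tau(x,o,u)\in\mathbb{R}$,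 set $Q_{\beta_\tau}(s_\tau,a_\tau)=\sum_{x,o}s_\tau(x,o)\,\beta_\tau(x,o,a_\tau(o))$. The single-stage subgame $G_{s_\tau}^{\beta_\tau}$ is the common-payoff game in which the $n$ players choose a joint decision rule $a_\tau$ to maximize $Q_{\beta_\tau}(s_\tau,a_\tau)$. The extensive-form game $\bar G_{s_\tau}^{\beta_\tau}$: a central planner acts for players $1,2,\dots,n$ in turn. Nodes of player $1$ are $\varsigma^1_\tau=(s_\tau,o^1_\tau)$, reached with the marginal probability of $o^1_\tau$ under $s_\tau$; at a node $\varsigma^i_\tau$ of player $i$ the planner chooses $u^i_\tau\in U^i$, and for $i<n$ the game moves to the node $\varsigma^{i+1}_\tau=(\varsigma^i_\tau,u^i_\tau,o^{i+1}_\tau)$ of player $i+1$ with probability $T(\varsigma^{i+1}_\tau\mid\varsigma^i_\tau,u^i_\tau)=\Pr\{o^{i+1}_\tau\mid s_\tau,o^1_\tau,\dots,o^i_\tau\}$ (computed from $s_\tau$). After player $n$ chooses $u^n_\tau$ at $\varsigma^n_\tau$, the common payoff is $R(\varsigma^n_\tau,u^n_\tau)=\mathbb{E}_{x\sim\Pr\{\cdot\mid\varsigma^n_\tau,u^n_\tau\}}\{\beta_\tau(x,o,u)\}$, where $o=(o^1_\tau,\dots,o^n_\tau)$ and $u=(u^1_\tau,\dots,u^n_\tau)$ are read off the node and $\Pr\{x\mid\varsigma^n_\tau\}=s_\tau(x\mid o)$. The optimal action-value function of player $i$ gives, at node $\varsigma^i_\tau$ and action $u^i_\tau$, the maximal expected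 payoff obtainable after playing $u^i_\tau$ there. *)

theory Defs
  imports Complex_Main
begin

(* Conventions: players are indexed 0..n-1 (paper: 1..n).
   A private history o^i_tau = (u^i_{0:tau-1}, z^i_{1:tau}) is the list
   [(u^i_0, z^i_1), ..., (u^i_{tau-1}, z^i_tau)]. *)

type_synonym ('u,'z) hist = "('u \<times> 'z) list"

record ('x,'u,'z) decpomdp =
  nP :: nat
  St :: "'x set"
  Act :: "nat \<Rightarrow> 'u set"
  Obs :: "nat \<Rightarrow> 'z set"
  trans :: "'x \<Rightarrow> 'u list \<Rightarrow> 'x \<Rightarrow> 'z list \<Rightarrow> real"  (* trans M x u y z = p(y,z | x,u) *)
  rew :: "'x \<Rightarrow> 'u list \<Rightarrow> real"
  init :: "'x \<Rightarrow> real"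
  disc :: real
  horizon :: nat

definition joint_act_ok :: "('x,'u,'z) decpomdp \<Rightarrow> 'u list \<Rightarrow> bool" where
  "joint_act_ok M u \<longleftrightarrow> length u = nP M \<and> (\<forall>i<nP M. u ! i \<in> Act M i)"

definition joint_obs_ok :: "('x,'u,'z) decpomdp \<Rightarrow> 'z list \<Rightarrow> bool" where
  "joint_obs_ok M z \<longleftrightarrow> length z = nP M \<and> (\<forall>i<nP M. z ! i \<in> Obs M i)"

definition is_decpomdp :: "('x,'u,'z) decpomdp \<Rightarrow> bool" where
  "is_decpomdp M \<longleftrightarrow>
     nP M \<ge> 1 \<and> finite (St M) \<and> St M \<noteq> {} \<and>
     (\<forall>i<nP M. finite (Act M i) \<and> Act M i \<noteq> {} \<and> finite (Obs M i) \<and> Obs M i \<noteq> {}) \<and>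
     (\<forall>x u y z. trans M x u y z \<ge> 0) \<and>
     (\<forall>x u y z. trans M x u y z \<noteq> 0 \<longrightarrow> y \<in> St M \<and> joint_obs_ok M z) \<and>
     (\<forall>x\<in>St M. \<forall>u. joint_act_ok M u \<longrightarrow>
        (\<Sum>y\<in>St M. \<Sum>z\<in>{z. joint_obs_ok M z}. trans M x u y z) = 1) \<and>
     (\<forall>x. init M x \<ge> 0) \<and> (\<forall>x. init M x \<noteq> 0 \<longrightarrow> x \<in> St M) \<and>
     (\<Sum>x\<in>St M. init M x) = 1 \<and>
     0 \<le> disc M \<and> disc M \<le> 1"

(* Hierarchical information sharing: for every player i>0 (0-based),
   zeta i (z^i_t) = (u^{i-1}_{t-1}, z^{i-1}_t) almost surely. *)
definition his :: "('x,'u,'z) decpomdp \<Rightarrow> (nat \<Rightarrow> 'z \<Rightarrow> 'u \<times> 'z) \<Rightarrow> bool" where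
  "his M \<zeta> \<longleftrightarrow> (\<forall>x u y z. joint_act_ok M u \<longrightarrow> trans M x u y z \<noteq> 0 \<longrightarrow>
      (\<forall>i. 1 \<le> i \<and> i < nP M \<longrightarrow> \<zeta> i (z ! i) = (u ! (i - 1), z ! (i - 1))))"

definition dr_ok :: "('x,'u,'z) decpomdp \<Rightarrow> (nat \<Rightarrow> ('u,'z) hist \<Rightarrow> 'u) \<Rightarrow> bool" where
  "dr_ok M a \<longleftrightarrow> (\<forall>i<nP M. \<forall>h. a i h \<in> Act M i)"

definition jact :: "('x,'u,'z) decpomdp \<Rightarrow> (nat \<Rightarrow> ('u,'z) hist \<Rightarrow> 'u) \<Rightarrow> ('u,'z) hist list \<Rightarrow> 'u list" where
  "jact M a oh = map (\<lambda>i. a i (oh ! i)) [0..<nP M]"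

(* occupancy state at stage t induced by joint decision rules A 0, ..., A (t-1) *)
fun occ :: "('x,'u,'z) decpomdp \<Rightarrow> (nat \<Rightarrow> nat \<Rightarrow> ('u,'z) hist \<Rightarrow> 'u) \<Rightarrow> nat
            \<Rightarrow> 'x \<times> ('u,'z) hist list \<Rightarrow> real" where
  "occ M A 0 (x, oh) = (if oh = replicate (nP M) [] then init M x else 0)"
| "occ M A (Suc t) (y, o') =
     (if length o' = nP M \<and> (\<forall>i<nP M. o' ! i \<noteq> []) then
        (\<Sum>x\<in>St M. occ M A t (x, map butlast o') *
           (if jact M (A t) (map butlast o') = map (fst \<circ> last) o'
            then trans M x (map (fst \<circ> last) o') y (map (snd \<circ> last) o') else 0))
      else 0)"

definition reachable_occ :: "('x,'u,'z) decpomdp \<Rightarrow> nat \<Rightarrow> ('x \<times> ('u,'z) hist list \<Rightarrow> real) \<Rightarrow> bool" where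
  "reachable_occ M \<tau> s \<longleftrightarrow> (\<exists>A. (\<forall>t<\<tau>. dr_ok M (A t)) \<and> s = occ M A \<tau>)"

definition osupp :: "('x \<times> ('u,'z) hist list \<Rightarrow> real) \<Rightarrow> ('x \<times> ('u,'z) hist list) set" where
  "osupp s = {xo. s xo \<noteq> 0}"

definition Qbeta :: "('x,'u,'z) decpomdp \<Rightarrow> ('x \<times> ('u,'z) hist list \<Rightarrow> real)
     \<Rightarrow> ('x \<Rightarrow> ('u,'z) hist list \<Rightarrow> 'u list \<Rightarrow> real)
     \<Rightarrow> (nat \<Rightarrow> ('u,'z) hist \<Rightarrow> 'u) \<Rightarrow> real" where
  "Qbeta M s \<beta> a = (\<Sum>xo\<in>osupp s. s xo * \<beta> (fst xo) (snd xo) (jact M a (snd xo)))"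

(* extensive-form game. A node of player i (0-based) is (os, us) with
   os = [o^0,...,o^i] and us = [u^0,...,u^{i-1}] (s is fixed). *)

definition marg :: "('x \<times> ('u,'z) hist list \<Rightarrow> real) \<Rightarrow> nat \<Rightarrow> ('u,'z) hist list \<Rightarrow> real" where
  "marg s k os = (\<Sum>xo\<in>{xo\<in>osupp s. take k (snd xo) = os}. s xo)"

definition hists :: "('x \<times> ('u,'z) hist list \<Rightarrow> real) \<Rightarrow> nat \<Rightarrow> ('u,'z) hist set" where
  "hists s i = (\<lambda>xo. snd xo ! i) ` osupp s"

(* T(node of next player with history o' | node with histories os) *)
definition trP :: "('x \<times> ('u,'z) hist list \<Rightarrow> real) \<Rightarrow> ('u,'z) hist list \<Rightarrow> ('u,'z) hist \<Rightarrow> real" where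
  "trP s os o' = marg s (Suc (length os)) (os @ [o']) / marg s (length os) os"

(* terminal payoff R at a node of the last player *)
definition payR :: "('x \<times> ('u,'z) hist list \<Rightarrow> real) \<Rightarrow> ('x \<Rightarrow> ('u,'z) hist list \<Rightarrow> 'u list \<Rightarrow> real)
     \<Rightarrow> ('u,'z) hist list \<times> 'u list \<Rightarrow> 'u \<Rightarrow> real" where
  "payR s \<beta> nd u = (\<Sum>x\<in>fst ` osupp s. (s (x, fst nd) / marg s (length (fst nd)) (fst nd)) *
                        \<beta> x (fst nd) (snd nd @ [u]))"

(* beta^{*} with d = number of remaining players after the current one *)
fun bst :: "('x,'u,'z) decpomdp \<Rightarrow> ('x \<times> ('u,'z) hist list \<Rightarrow> real) \<Rightarrow> ('x \<Rightarrow> ('u,'z) hist list \<Rightarrow> 'u list \<Rightarrow> real)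
     \<Rightarrow> nat \<Rightarrow> ('u,'z) hist list \<times> 'u list \<Rightarrow> 'u \<Rightarrow> real" where
  "bst M s \<beta> 0 nd u = payR s \<beta> nd u"
| "bst M s \<beta> (Suc d) (os, us) u =
     (\<Sum>o'\<in>hists s (length os). trP s os o' *
        Max ((bst M s \<beta> d (os @ [o'], us @ [u])) ` Act M (length os)))"

definition betastar :: "('x,'u,'z) decpomdp \<Rightarrow> ('x \<times> ('u,'z) hist list \<Rightarrow> real) \<Rightarrow> ('x \<Rightarrow> ('u,'z) hist list \<Rightarrow> 'u list \<Rightarrow> real)
     \<Rightarrow> nat \<Rightarrow> ('u,'z) hist list \<times> 'u list \<Rightarrow> 'u \<Rightarrow> real" where
  "betastar M s \<beta> i nd u = bst M s \<beta> (nP M - 1 - i) nd u"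

definition strat_ok :: "('x,'u,'z) decpomdp \<Rightarrow> (nat \<Rightarrow> ('u,'z) hist list \<times> 'u list \<Rightarrow> 'u) \<Rightarrow> bool" where
  "strat_ok M \<sigma> \<longleftrightarrow> (\<forall>i<nP M. \<forall>nd. \<sigma> i nd \<in> Act M i)"

(* expected payoff under sigma after playing u at node nd, d players remaining *)
fun spay :: "('x,'u,'z) decpomdp \<Rightarrow> ('x \<times> ('u,'z) hist list \<Rightarrow> real) \<Rightarrow> ('x \<Rightarrow> ('u,'z) hist list \<Rightarrow> 'u list \<Rightarrow> real)
     \<Rightarrow> (nat \<Rightarrow> ('u,'z) hist list \<times> 'u list \<Rightarrow> 'u) \<Rightarrow> nat \<Rightarrow> ('u,'z) hist list \<times> 'u list \<Rightarrow> 'u \<Rightarrow> real" where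
  "spay M s \<beta> \<sigma> 0 nd u = payR s \<beta> nd u"
| "spay M s \<beta> \<sigma> (Suc d) (os, us) u =
     (\<Sum>o'\<in>hists s (length os). trP s os o' *
        spay M s \<beta> \<sigma> d (os @ [o'], us @ [u]) (\<sigma> (length os) (os @ [o'], us @ [u])))"

definition payoff_after :: "('x,'u,'z) decpomdp \<Rightarrow> ('x \<times> ('u,'z) hist list \<Rightarrow> real) \<Rightarrow> ('x \<Rightarrow> ('u,'z) hist list \<Rightarrow> 'u list \<Rightarrow> real)
     \<Rightarrow> (nat \<Rightarrow> ('u,'z) hist list \<times> 'u list \<Rightarrow> 'u) \<Rightarrow> nat \<Rightarrow> ('u,'z) hist list \<times> 'u list \<Rightarrow> 'u \<Rightarrow> real" where
  "payoff_after M s \<beta> \<sigma> i nd u = spay M s \<beta> \<sigma> (nP M - 1 - i) nd u"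

definition game_val :: "('x,'u,'z) decpomdp \<Rightarrow> ('x \<times> ('u,'z) hist list \<Rightarrow> real) \<Rightarrow> ('x \<Rightarrow> ('u,'z) hist list \<Rightarrow> 'u list \<Rightarrow> real)
     \<Rightarrow> (nat \<Rightarrow> ('u,'z) hist list \<times> 'u list \<Rightarrow> 'u) \<Rightarrow> real" where
  "game_val M s \<beta> \<sigma> = (\<Sum>o1\<in>hists s 0. marg s 1 [o1] * payoff_after M s \<beta> \<sigma> 0 ([o1], []) (\<sigma> 0 ([o1], [])))"

definition node_ok :: "('x,'u,'z) decpomdp \<Rightarrow> ('x \<times> ('u,'z) hist list \<Rightarrow> real) \<Rightarrow> nat \<Rightarrow> ('u,'z) hist list \<times> 'u list \<Rightarrow> bool" where
  "node_ok M s i nd \<longleftrightarrow> length (fst nd) = Suc i \<and> length (snd nd) = i \<and>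
      (\<forall>j<i. snd nd ! j \<in> Act M j) \<and> marg s (Suc i) (fst nd) > 0"

(* Recovering o^{0:i} from o^i via the HIS maps zeta *)
definition down :: "(nat \<Rightarrow> 'z \<Rightarrow> 'u \<times> 'z) \<Rightarrow> nat \<Rightarrow> ('u,'z) hist \<Rightarrow> ('u,'z) hist" where
  "down \<zeta> i h = map (\<lambda>p. \<zeta> i (snd p)) h"

fun lowhists :: "(nat \<Rightarrow> 'z \<Rightarrow> 'u \<times> 'z) \<Rightarrow> nat \<Rightarrow> ('u,'z) hist \<Rightarrow> ('u,'z) hist list" where
  "lowhists \<zeta> 0 h = [h]"
| "lowhists \<zeta> (Suc i) h = lowhists \<zeta> i (down \<zeta> (Suc i) h) @ [h]"

(* actions [a^0(o^0), ..., a^i(o^i)] of the decision rules induced by sigma *)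
fun sacts :: "(nat \<Rightarrow> 'z \<Rightarrow> 'u \<times> 'z) \<Rightarrow> (nat \<Rightarrow> ('u,'z) hist list \<times> 'u list \<Rightarrow> 'u) \<Rightarrow> nat
     \<Rightarrow> ('u,'z) hist \<Rightarrow> 'u list" where
  "sacts \<zeta> \<sigma> 0 h = [\<sigma> 0 ([h], [])]"
| "sacts \<zeta> \<sigma> (Suc i) h =
     (let prev = sacts \<zeta> \<sigma> i (down \<zeta> (Suc i) h)
      in prev @ [\<sigma> (Suc i) (lowhists \<zeta> (Suc i) h, prev)])"

(* a^i(o^i) = sigma(<s, o^{0:i}, a^{0:i-1}(o^{0:i-1})>) *)
definition rule_of :: "(nat \<Rightarrow> 'z \<Rightarrow> 'u \<times> 'z) \<Rightarrow> (nat \<Rightarrow> ('u,'z) hist list \<times> 'u list \<Rightarrow> 'u)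
     \<Rightarrow> nat \<Rightarrow> ('u,'z) hist \<Rightarrow> 'u" where
  "rule_of \<zeta> \<sigma> i h = last (sacts \<zeta> \<sigma> i h)"

definition is_greedy :: "('x,'u,'z) decpomdp \<Rightarrow> ('x \<times> ('u,'z) hist list \<Rightarrow> real)
     \<Rightarrow> ('x \<Rightarrow> ('u,'z) hist list \<Rightarrow> 'u list \<Rightarrow> real) \<Rightarrow> (nat \<Rightarrow> 'z \<Rightarrow> 'u \<times> 'z)
     \<Rightarrow> (nat \<Rightarrow> ('u,'z) hist \<Rightarrow> 'u) \<Rightarrow> bool" where
  "is_greedy M s \<beta> \<zeta> a \<longleftrightarrow> (\<forall>i<nP M. \<forall>h.
      (let nd = (lowhists \<zeta> i h, map (\<lambda>j. a j (lowhists \<zeta> i h ! j)) [0..<i]) in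
       a i h \<in> Act M i \<and>
       betastar M s \<beta> i nd (a i h) = Max (betastar M s \<beta> i nd ` Act M i)))"

end

theory Submission
  imports Defs
begin
lemma occ_nonneg: "is_decpomdp M \<Longrightarrow> occ M A t xo \<ge> 0"
proof (induction t arbitrary: xo)
  case 0 then show ?case by (cases xo) (auto simp: is_decpomdp_def)
next
  case (Suc t)
  have tr: "\<And>x u y z. decpomdp.trans M x u y z \<ge> 0" using Suc.prems by (auto simp: is_decpomdp_def)
  show ?case
    using Suc.IH[OF Suc.prems] by (cases xo) (auto intro!: sum_nonneg mult_nonneg_nonneg tr)
qed

lemma down_snoc: "down \<zeta> j (h @ [p]) = down \<zeta> j h @ [\<zeta> j (snd p)]"
  by (simp add: down_def)

lemma sum_nz_ex: "sum f A \<noteq> (0::real) \<Longrightarrow> \<exists>a\<in>A. f a \<noteq> 0"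
  by (meson sum.neutral)

lemma occ_Suc_nz:
  assumes "occ M A (Suc t) (x, oh) \<noteq> 0"
  shows "length oh = nP M \<and> (\<forall>i<nP M. oh ! i \<noteq> []) \<and>
    (\<exists>y. occ M A t (y, map butlast oh) \<noteq> 0 \<and> jact M (A t) (map butlast oh) = map (fst \<circ> last) oh
       \<and> decpomdp.trans M y (map (fst \<circ> last) oh) x (map (snd \<circ> last) oh) \<noteq> 0)"
proof -
  have c: "length oh = nP M \<and> (\<forall>i<nP M. oh ! i \<noteq> [])" using assms by (auto split: if_splits)
  then have "(\<Sum>y\<in>St M. occ M A t (y, map butlast oh) *
           (if jact M (A t) (map butlast oh) = map (fst \<circ> last) oh
            then decpomdp.trans M y (map (fst \<circ> last) oh) x (map (snd \<circ> last) oh) else 0)) \<noteq> 0"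
    using assms by simp
  from sum_nz_ex[OF this] obtain y where "occ M A t (y, map butlast oh) *
           (if jact M (A t) (map butlast oh) = map (fst \<circ> last) oh
            then decpomdp.trans M y (map (fst \<circ> last) oh) x (map (snd \<circ> last) oh) else 0) \<noteq> 0"
    by blast
  then show ?thesis using c by (auto split: if_splits)
qed

lemma occ_supp:
  assumes "is_decpomdp M" "his M \<zeta>" "\<forall>t'<t. dr_ok M (A t')" "occ M A t (x,oh) \<noteq> 0"
  shows "length oh = nP M \<and> (\<forall>j. 1 \<le> j \<and> j < nP M \<longrightarrow> down \<zeta> j (oh!j) = oh!(j-1))"
  using assms(3,4)
proof (induction t arbitrary: x oh)
  case 0 then show ?case by (auto simp: down_def split: if_splits)
next
  case (Suc t)
  from Suc.prems(2) have L: "length oh = nP M" and ne: "\<forall>i<nP M. oh ! i \<noteq> []"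
    by (auto split: if_splits)
  from Suc.prems(2) L ne obtain y where
    y: "occ M A t (y, map butlast oh) \<noteq> 0"
    and ja: "jact M (A t) (map butlast oh) = map (fst \<circ> last) oh"
    and tr: "decpomdp.trans M y (map (fst \<circ> last) oh) x (map (snd \<circ> last) oh) \<noteq> 0"
    using occ_Suc_nz[OF Suc.prems(2)] by blast
  have IH: "\<forall>j. 1 \<le> j \<and> j < nP M \<longrightarrow> down \<zeta> j (butlast (oh!j)) = butlast (oh!(j-1))"
    using Suc.IH[OF _ y] Suc.prems(1) L by auto
  have dr: "dr_ok M (A t)" using Suc.prems(1) by auto
  have jok: "joint_act_ok M (map (fst \<circ> last) oh)"
    unfolding joint_act_ok_def ja[symmetric] using dr L by (auto simp: jact_def dr_ok_def)
  have Z: "\<zeta> j (map (snd \<circ> last) oh ! j) = (map (fst \<circ> last) oh ! (j - 1), map (snd \<circ> last) oh ! (j - 1))"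
    if "1 \<le> j" "j < nP M" for j
    using assms(2) jok tr that unfolding his_def by blast
  show ?case
  proof (intro conjI allI impI L)
    fix j assume j: "1 \<le> j \<and> j < nP M"
    have e1: "oh ! j = butlast (oh!j) @ [last (oh!j)]" using ne j by auto
    have e2: "oh ! (j-1) = butlast (oh!(j-1)) @ [last (oh!(j-1))]" using ne j by auto
    have "down \<zeta> j (oh!j) = butlast (oh!(j-1)) @ [\<zeta> j (snd (last (oh!j)))]"
      by (subst e1, simp only: down_snoc, use IH j in simp)
    also have "\<zeta> j (snd (last (oh!j))) = last (oh!(j-1))" using Z[of j] j L by auto
    finally show "down \<zeta> j (oh!j) = oh!(j-1)" using e2 by simp
  qed
qed

lemma finite_jobs: "is_decpomdp M \<Longrightarrow> finite {z. joint_obs_ok M z}"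
proof -
  assume d: "is_decpomdp M"
  have "{z. joint_obs_ok M z} \<subseteq> {zs. set zs \<subseteq> (\<Union>i<nP M. Obs M i) \<and> length zs = nP M}"
    by (auto simp: joint_obs_ok_def in_set_conv_nth lessThan_def) (metis lessThan_iff)
  moreover have "finite (\<Union>i<nP M. Obs M i)" using d by (auto simp: is_decpomdp_def)
  ultimately show ?thesis by (rule finite_subset[OF _ finite_lists_length_eq])
qed

lemma occ_fin:
  assumes "is_decpomdp M"
  shows "finite (osupp (occ M A t))"
proof (induction t)
  case 0
  have "osupp (occ M A 0) \<subseteq> St M \<times> {replicate (nP M) []}"
    using assms by (auto simp: osupp_def is_decpomdp_def split: if_splits)
  moreover have "finite (St M)" using assms by (auto simp: is_decpomdp_def)
  ultimately show ?case by (meson finite.emptyI finite.insertI finite_SigmaI finite_subset)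
next
  case (Suc t)
  define F where "F = (\<lambda>(b, z). map (\<lambda>i. b!i @ [(jact M (A t) b ! i, z!i)]) [0..<nP M])"
  have "osupp (occ M A (Suc t)) \<subseteq> St M \<times> (F ` (snd ` osupp (occ M A t) \<times> {z. joint_obs_ok M z}))"
  proof
    fix xo assume xo: "xo \<in> osupp (occ M A (Suc t))"
    obtain x oh where xoe: "xo = (x, oh)" by (cases xo)
    from xo xoe have nz: "occ M A (Suc t) (x, oh) \<noteq> 0" by (simp add: osupp_def)
    from nz have L: "length oh = nP M" and ne: "\<forall>i<nP M. oh ! i \<noteq> []"
      by (auto split: if_splits)
    from nz L ne obtain y where
      y: "occ M A t (y, map butlast oh) \<noteq> 0"
      and ja: "jact M (A t) (map butlast oh) = map (fst \<circ> last) oh"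
      and tr: "decpomdp.trans M y (map (fst \<circ> last) oh) x (map (snd \<circ> last) oh) \<noteq> 0"
      using occ_Suc_nz[OF nz] by blast
    have xs: "x \<in> St M" and zo: "joint_obs_ok M (map (snd \<circ> last) oh)"
      using tr assms by (auto simp: is_decpomdp_def)
    have "oh = F (map butlast oh, map (snd \<circ> last) oh)"
    proof (rule nth_equalityI)
      show "length oh = length (F (map butlast oh, map (snd \<circ> last) oh))" using L by (simp add: F_def)
      fix i assume i: "i < length oh"
      have jj: "jact M (A t) (map butlast oh) ! i = fst (last (oh!i))" using ja L i by simp
      have "oh ! i = butlast (oh!i) @ [last (oh!i)]" using ne L i by simp
      then show "oh ! i = F (map butlast oh, map (snd \<circ> last) oh) ! i"
        using i L jj by (simp add: F_def)
    qed
    moreover have "map butlast oh \<in> snd ` osupp (occ M A t)"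
      using y by (force simp: osupp_def)
    ultimately show "xo \<in> St M \<times> (F ` (snd ` osupp (occ M A t) \<times> {z. joint_obs_ok M z}))"
      using xs zo xoe by blast
  qed
  moreover have "finite (St M)" using assms by (auto simp: is_decpomdp_def)
  ultimately show ?case using Suc finite_jobs[OF assms]
    by (meson finite_SigmaI finite_imageI finite_subset)
qed


fun extacts :: "(nat \<Rightarrow> ('u,'z) hist list \<times> 'u list \<Rightarrow> 'u) \<Rightarrow> ('u,'z) hist list \<Rightarrow> nat \<Rightarrow> 'u list \<Rightarrow> 'u list" where
  "extacts \<sigma> oh 0 us = us"
| "extacts \<sigma> oh (Suc d) us = extacts \<sigma> oh d (us @ [\<sigma> (length us) (take (Suc (length us)) oh, us)])"

fun pa :: "(nat \<Rightarrow> ('u,'z) hist list \<times> 'u list \<Rightarrow> 'u) \<Rightarrow> ('u,'z) hist list \<Rightarrow> nat \<Rightarrow> 'u list" where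
  "pa \<sigma> oh 0 = [\<sigma> 0 (take 1 oh, [])]"
| "pa \<sigma> oh (Suc j) = pa \<sigma> oh j @ [\<sigma> (Suc j) (take (Suc (Suc j)) oh, pa \<sigma> oh j)]"

lemma pa_len[simp]: "length (pa \<sigma> oh j) = Suc j"
  by (induction j) auto

lemma ext_pa: "extacts \<sigma> oh d (pa \<sigma> oh j) = pa \<sigma> oh (j + d)"
proof (induction d arbitrary: j)
  case 0 then show ?case by simp
next
  case (Suc d)
  have "extacts \<sigma> oh (Suc d) (pa \<sigma> oh j) = extacts \<sigma> oh d (pa \<sigma> oh (Suc j))" by simp
  then show ?case using Suc.IH[of "Suc j"] by simp
qed

lemma pa_map: "pa \<sigma> oh j = map (\<lambda>i. last (pa \<sigma> oh i)) [0..<Suc j]"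
proof (induction j)
  case 0 then show ?case by simp
next
  case (Suc j)
  have "map (\<lambda>i. last (pa \<sigma> oh i)) [0..<Suc (Suc j)] = map (\<lambda>i. last (pa \<sigma> oh i)) [0..<Suc j] @ [last (pa \<sigma> oh (Suc j))]"
    by simp
  also have "\<dots> = pa \<sigma> oh j @ [last (pa \<sigma> oh (Suc j))]" by (simp only: Suc.IH[symmetric])
  also have "\<dots> = pa \<sigma> oh (Suc j)" by simp
  finally show ?case by (rule sym)
qed

lemma last_sacts: "last (sacts \<zeta> \<sigma> i h) = \<sigma> i (lowhists \<zeta> i h, butlast (sacts \<zeta> \<sigma> i h))"
  by (cases i) (auto simp: Let_def)

lemma last_lowhists[simp]: "last (lowhists \<zeta> i h) = h"
  by (cases i) auto

locale LL =
  fixes M :: "('x,'u,'z) decpomdp" and s :: "'x \<times> ('u,'z) hist list \<Rightarrow> real"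
    and \<zeta> :: "nat \<Rightarrow> 'z \<Rightarrow> 'u \<times> 'z" and \<beta> :: "'x \<Rightarrow> ('u,'z) hist list \<Rightarrow> 'u list \<Rightarrow> real"
  assumes npos: "1 \<le> nP M"
  and actf: "\<And>i. i < nP M \<Longrightarrow> finite (Act M i)"
  and actne: "\<And>i. i < nP M \<Longrightarrow> Act M i \<noteq> {}"
  and fin: "finite (osupp s)" and nn: "\<And>xo. s xo \<ge> 0"
  and len: "\<And>xo. xo \<in> osupp s \<Longrightarrow> length (snd xo) = nP M"
  and dn: "\<And>xo j. xo \<in> osupp s \<Longrightarrow> 1 \<le> j \<Longrightarrow> j < nP M \<Longrightarrow> down \<zeta> j (snd xo ! j) = snd xo ! (j-1)"
begin

lemma pos: "xo \<in> osupp s \<Longrightarrow> s xo > 0"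
  using nn[of xo] by (auto simp: osupp_def)

lemma marg_nn: "marg s k os \<ge> 0"
  unfolding marg_def by (rule sum_nonneg) (use nn in auto)

lemma trP_nn: "trP s os o' \<ge> 0"
  unfolding trP_def using marg_nn by simp

lemma marg_zero_empty:
  assumes "marg s k os = 0" shows "{xo\<in>osupp s. take k (snd xo) = os} = {}"
proof -
  have "\<forall>xo\<in>{xo\<in>osupp s. take k (snd xo) = os}. s xo = 0"
    using assms fin nn unfolding marg_def by (subst sum_nonneg_eq_0_iff[symmetric]) auto
  then show ?thesis using pos by force
qed

lemma marg_ex: "marg s k os \<noteq> 0 \<Longrightarrow> \<exists>xo\<in>osupp s. take k (snd xo) = os"
  unfolding marg_def by (metis (mono_tags, lifting) empty_Collect_eq sum.empty)

lemma lowhists_supp: "xo \<in> osupp s \<Longrightarrow> i < nP M \<Longrightarrow> lowhists \<zeta> i (snd xo ! i) = take (Suc i) (snd xo)"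
proof (induction i)
  case 0
  have "length (snd xo) = nP M" using len "0.prems"(1) by blast
  then have "snd xo \<noteq> []" using npos by auto
  then show ?case by (cases "snd xo") auto
next
  case (Suc i)
  have "lowhists \<zeta> (Suc i) (snd xo ! Suc i) = lowhists \<zeta> i (snd xo ! i) @ [snd xo ! Suc i]"
    using dn[OF Suc.prems(1), of "Suc i"] Suc.prems by simp
  also have "\<dots> = take (Suc (Suc i)) (snd xo)"
    using Suc len[OF Suc.prems(1)] by (simp add: take_Suc_conv_app_nth)
  finally show ?case .
qed

lemma sacts_supp: "xo \<in> osupp s \<Longrightarrow> i < nP M \<Longrightarrow> sacts \<zeta> \<sigma> i (snd xo ! i) = pa \<sigma> (snd xo) i"
proof (induction i)
  case 0
  have "length (snd xo) = nP M" using len "0.prems"(1) by blast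
  then have "snd xo \<noteq> []" using npos by auto
  then show ?case by (cases "snd xo") auto
next
  case (Suc i)
  show ?case using Suc dn[OF Suc.prems(1), of "Suc i"] lowhists_supp[OF Suc.prems]
    by (simp add: Let_def)
qed

lemma spay_le:
  assumes "strat_ok M \<sigma>"
  shows "length (fst nd) + d = nP M \<Longrightarrow> spay M s \<beta> \<sigma> d nd u \<le> bst M s \<beta> d nd u"
proof (induction d arbitrary: nd u)
  case 0 then show ?case by (cases nd) auto
next
  case (Suc d)
  obtain os us where nd: "nd = (os, us)" by (cases nd)
  let ?k = "length os"
  have k: "?k < nP M" using Suc.prems nd by simp
  show ?case unfolding nd spay.simps bst.simps
  proof (rule sum_mono, rule mult_left_mono[OF _ trP_nn])
    fix o' assume "o' \<in> hists s ?k"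
    have "spay M s \<beta> \<sigma> d (os @ [o'], us @ [u]) (\<sigma> ?k (os @ [o'], us @ [u]))
        \<le> bst M s \<beta> d (os @ [o'], us @ [u]) (\<sigma> ?k (os @ [o'], us @ [u]))"
      using Suc.IH Suc.prems nd by simp
    also have "\<dots> \<le> Max (bst M s \<beta> d (os @ [o'], us @ [u]) ` Act M ?k)"
      using assms k actf[OF k] unfolding strat_ok_def by (intro Max_ge) auto
    finally show "spay M s \<beta> \<sigma> d (os @ [o'], us @ [u]) (\<sigma> ?k (os @ [o'], us @ [u]))
        \<le> Max (bst M s \<beta> d (os @ [o'], us @ [u]) ` Act M ?k)" .
  qed
qed

definition gs :: "nat \<Rightarrow> ('u,'z) hist list \<times> 'u list \<Rightarrow> 'u" where
  "gs i nd = (SOME u. u \<in> Act M i \<and> bst M s \<beta> (nP M - 1 - i) nd u = Max (bst M s \<beta> (nP M - 1 - i) nd ` Act M i))"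

lemma gs_prop: "i < nP M \<Longrightarrow> gs i nd \<in> Act M i \<and> bst M s \<beta> (nP M - 1 - i) nd (gs i nd) = Max (bst M s \<beta> (nP M - 1 - i) nd ` Act M i)"
proof -
  assume i: "i < nP M"
  have "Max (bst M s \<beta> (nP M - 1 - i) nd ` Act M i) \<in> bst M s \<beta> (nP M - 1 - i) nd ` Act M i"
    using actf[OF i] actne[OF i] by (intro Max_in) auto
  then have "\<exists>u. u \<in> Act M i \<and> bst M s \<beta> (nP M - 1 - i) nd u = Max (bst M s \<beta> (nP M - 1 - i) nd ` Act M i)"
    by force
  then show ?thesis unfolding gs_def by (rule someI_ex)
qed

lemma gs_ok: "strat_ok M gs"
  using gs_prop by (auto simp: strat_ok_def)

lemma spay_gs: "length (fst nd) + d = nP M \<Longrightarrow> spay M s \<beta> gs d nd u = bst M s \<beta> d nd u"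
proof (induction d arbitrary: nd u)
  case 0 then show ?case by (cases nd) auto
next
  case (Suc d)
  obtain os us where nd: "nd = (os, us)" by (cases nd)
  let ?k = "length os"
  have k: "?k < nP M" and dk: "nP M - 1 - ?k = d" using Suc.prems nd by auto
  show ?case unfolding nd spay.simps bst.simps
  proof (rule sum.cong[OF refl])
    fix o' assume "o' \<in> hists s ?k"
    have "spay M s \<beta> gs d (os @ [o'], us @ [u]) (gs ?k (os @ [o'], us @ [u]))
        = bst M s \<beta> d (os @ [o'], us @ [u]) (gs ?k (os @ [o'], us @ [u]))"
      using Suc.IH Suc.prems nd by simp
    also have "\<dots> = Max (bst M s \<beta> d (os @ [o'], us @ [u]) ` Act M ?k)"
      using gs_prop[OF k] dk by simp
    finally show "trP s os o' * spay M s \<beta> gs d (os @ [o'], us @ [u]) (gs ?k (os @ [o'], us @ [u]))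
        = trP s os o' * Max (bst M s \<beta> d (os @ [o'], us @ [u]) ` Act M ?k)" by simp
  qed
qed

end


context LL begin

lemma central:
  "length os + d = nP M \<Longrightarrow> length us + 1 = length os \<Longrightarrow>
   marg s (length os) os * spay M s \<beta> \<sigma> d (os, us) u =
   (\<Sum>xo\<in>{xo\<in>osupp s. take (length os) (snd xo) = os}. s xo * \<beta> (fst xo) (snd xo) (extacts \<sigma> (snd xo) d (us @ [u])))"
proof (induction d arbitrary: os us u)
  case 0
  show ?case
  proof (cases "marg s (length os) os = 0")
    case True then show ?thesis unfolding marg_zero_empty[OF True] by simp
  next
    case False
    let ?S = "{xo\<in>osupp s. take (length os) (snd xo) = os}"
    have S: "?S = (\<lambda>x. (x, os)) ` {x \<in> fst ` osupp s. s (x, os) \<noteq> 0}"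
      using len "0.prems" by (auto simp: osupp_def image_iff)
    have "marg s (length os) os * spay M s \<beta> \<sigma> 0 (os, us) u =
       (\<Sum>x\<in>fst ` osupp s. s (x, os) * \<beta> x os (us @ [u]))"
      using False by (simp add: payR_def sum_distrib_left)
    also have "\<dots> = (\<Sum>x\<in>{x \<in> fst ` osupp s. s (x, os) \<noteq> 0}. s (x, os) * \<beta> x os (us @ [u]))"
      using fin by (intro sum.mono_neutral_right) auto
    also have "\<dots> = (\<Sum>xo\<in>?S. s xo * \<beta> (fst xo) (snd xo) (us @ [u]))"
      unfolding S by (subst sum.reindex) (auto simp: inj_on_def)
    finally show ?thesis by simp
  qed
next
  case (Suc d)
  let ?k = "length os"
  let ?S = "{xo\<in>osupp s. take ?k (snd xo) = os}"
  let ?g = "\<lambda>xo. s xo * \<beta> (fst xo) (snd xo) (extacts \<sigma> (snd xo) (Suc d) (us @ [u]))"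
  have k: "?k < nP M" using Suc.prems by simp
  show ?case
  proof (cases "marg s ?k os = 0")
    case True then show ?thesis unfolding marg_zero_empty[OF True] by simp
  next
    case False
    have "marg s ?k os * spay M s \<beta> \<sigma> (Suc d) (os, us) u =
      (\<Sum>o'\<in>hists s ?k. marg s (Suc ?k) (os @ [o']) *
          spay M s \<beta> \<sigma> d (os @ [o'], us @ [u]) (\<sigma> ?k (os @ [o'], us @ [u])))"
      using False by (simp add: sum_distrib_left trP_def)
    also have "\<dots> = (\<Sum>o'\<in>hists s ?k. \<Sum>xo\<in>{xo \<in> ?S. snd xo ! ?k = o'}. ?g xo)"
    proof (rule sum.cong[OF refl])
      fix o' assume "o' \<in> hists s ?k"
      have eqS: "{xo\<in>osupp s. take (length (os @ [o'])) (snd xo) = os @ [o']} = {xo \<in> ?S. snd xo ! ?k = o'}"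
      proof -
        have "take (Suc ?k) (snd xo) = os @ [o'] \<longleftrightarrow> take ?k (snd xo) = os \<and> snd xo ! ?k = o'"
          if "xo \<in> osupp s" for xo
          using len[OF that] k by (auto simp: take_Suc_conv_app_nth)
        then show ?thesis by auto
      qed
      have "marg s (Suc ?k) (os @ [o']) * spay M s \<beta> \<sigma> d (os @ [o'], us @ [u]) (\<sigma> ?k (os @ [o'], us @ [u]))
         = (\<Sum>xo\<in>{xo\<in>osupp s. take (length (os @ [o'])) (snd xo) = os @ [o']}.
              s xo * \<beta> (fst xo) (snd xo) (extacts \<sigma> (snd xo) d ((us @ [u]) @ [\<sigma> ?k (os @ [o'], us @ [u])])))"
        using Suc.IH[of "os @ [o']" "us @ [u]" "\<sigma> ?k (os @ [o'], us @ [u])"] Suc.prems by simp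
      also have "\<dots> = (\<Sum>xo\<in>{xo \<in> ?S. snd xo ! ?k = o'}. ?g xo)"
        unfolding eqS
      proof (rule sum.cong[OF refl])
        fix xo assume xo: "xo \<in> {xo \<in> ?S. snd xo ! ?k = o'}"
        then have "take (Suc ?k) (snd xo) = os @ [o']"
          using len[of xo] k by (auto simp: take_Suc_conv_app_nth)
        then show "s xo * \<beta> (fst xo) (snd xo) (extacts \<sigma> (snd xo) d ((us @ [u]) @ [\<sigma> ?k (os @ [o'], us @ [u])])) = ?g xo"
          using Suc.prems by simp
      qed
      finally show "marg s (Suc ?k) (os @ [o']) * spay M s \<beta> \<sigma> d (os @ [o'], us @ [u]) (\<sigma> ?k (os @ [o'], us @ [u]))
         = (\<Sum>xo\<in>{xo \<in> ?S. snd xo ! ?k = o'}. ?g xo)" .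
    qed
    also have "\<dots> = sum ?g ?S"
      by (rule sum.group) (use fin in \<open>auto simp: hists_def\<close>)
    finally show ?thesis .
  qed
qed

lemma Qbeta_game: "Qbeta M s \<beta> (rule_of \<zeta> \<sigma>) = game_val M s \<beta> \<sigma>"
proof -
  have "game_val M s \<beta> \<sigma> = (\<Sum>o1\<in>hists s 0. \<Sum>xo\<in>{xo \<in> osupp s. snd xo ! 0 = o1}.
          s xo * \<beta> (fst xo) (snd xo) (jact M (rule_of \<zeta> \<sigma>) (snd xo)))"
    unfolding game_val_def payoff_after_def
  proof (rule sum.cong[OF refl])
    fix o1 assume "o1 \<in> hists s 0"
    have eqS: "{xo\<in>osupp s. take (length [o1]) (snd xo) = [o1]} = {xo \<in> osupp s. snd xo ! 0 = o1}"
    proof -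
      have "take 1 (snd xo) = [o1] \<longleftrightarrow> snd xo ! 0 = o1" if "xo \<in> osupp s" for xo
        using len[OF that] npos by (cases "snd xo") auto
      then show ?thesis by auto
    qed
    have "marg s 1 [o1] * spay M s \<beta> \<sigma> (nP M - 1 - 0) ([o1], []) (\<sigma> 0 ([o1], []))
      = (\<Sum>xo\<in>{xo\<in>osupp s. take (length [o1]) (snd xo) = [o1]}.
            s xo * \<beta> (fst xo) (snd xo) (extacts \<sigma> (snd xo) (nP M - 1 - 0) ([] @ [\<sigma> 0 ([o1], [])])))"
      using central[of "[o1]" "nP M - 1 - 0" "[]" \<sigma> "\<sigma> 0 ([o1], [])"] npos by simp
    also have "\<dots> = (\<Sum>xo\<in>{xo \<in> osupp s. snd xo ! 0 = o1}.
          s xo * \<beta> (fst xo) (snd xo) (jact M (rule_of \<zeta> \<sigma>) (snd xo)))"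
      unfolding eqS
    proof (rule sum.cong[OF refl])
      fix xo assume xo: "xo \<in> {xo \<in> osupp s. snd xo ! 0 = o1}"
      then have xs: "xo \<in> osupp s" and L: "length (snd xo) = nP M" using len by auto
      have t1: "take 1 (snd xo) = [o1]" using xo L npos by (cases "snd xo") auto
      have "[] @ [\<sigma> 0 ([o1], [])] = pa \<sigma> (snd xo) 0" using t1 by simp
      then have "extacts \<sigma> (snd xo) (nP M - 1 - 0) ([] @ [\<sigma> 0 ([o1], [])]) = pa \<sigma> (snd xo) (nP M - 1)"
        using ext_pa[of \<sigma> "snd xo" "nP M - 1" 0] by simp
      also have "\<dots> = map (\<lambda>i. last (pa \<sigma> (snd xo) i)) [0..<nP M]"
        using pa_map[of \<sigma> "snd xo" "nP M - 1"] npos by simp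
      also have "\<dots> = jact M (rule_of \<zeta> \<sigma>) (snd xo)"
        unfolding jact_def rule_of_def using sacts_supp[OF xs] by simp
      finally show "s xo * \<beta> (fst xo) (snd xo) (extacts \<sigma> (snd xo) (nP M - 1 - 0) ([] @ [\<sigma> 0 ([o1], [])]))
          = s xo * \<beta> (fst xo) (snd xo) (jact M (rule_of \<zeta> \<sigma>) (snd xo))" by simp
    qed
    finally show "marg s 1 [o1] * spay M s \<beta> \<sigma> (nP M - 1 - 0) ([o1], []) (\<sigma> 0 ([o1], []))
      = (\<Sum>xo\<in>{xo \<in> osupp s. snd xo ! 0 = o1}.
          s xo * \<beta> (fst xo) (snd xo) (jact M (rule_of \<zeta> \<sigma>) (snd xo)))" .
  qed
  also have "\<dots> = Qbeta M s \<beta> (rule_of \<zeta> \<sigma>)"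
    unfolding Qbeta_def by (rule sum.group) (use fin in \<open>auto simp: hists_def\<close>)
  finally show ?thesis by simp
qed

end


definition sa :: "(nat \<Rightarrow> ('u,'z) hist \<Rightarrow> 'u) \<Rightarrow> nat \<Rightarrow> ('u,'z) hist list \<times> 'u list \<Rightarrow> 'u" where
  "sa a = (\<lambda>i nd. a i (last (fst nd)))"

lemma rule_of_sa: "rule_of \<zeta> (sa a) i h = a i h"
  unfolding rule_of_def last_sacts by (simp add: sa_def)

lemma rule_of_ok: "strat_ok M \<sigma> \<Longrightarrow> dr_ok M (rule_of \<zeta> \<sigma>)"
  unfolding rule_of_def last_sacts by (simp add: strat_ok_def dr_ok_def)

lemma sa_ok: "dr_ok M a \<Longrightarrow> strat_ok M (sa a)"
  by (simp add: strat_ok_def dr_ok_def sa_def)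

context LL begin

lemma spay_greedy:
  assumes g: "is_greedy M s \<beta> \<zeta> a"
  shows "length os + d = nP M \<Longrightarrow> length us + 1 = length os \<Longrightarrow> us = map (\<lambda>j. a j (os!j)) [0..<length us] \<Longrightarrow>
    spay M s \<beta> (sa a) d (os,us) (a (length us) (last os)) = bst M s \<beta> d (os,us) (a (length us) (last os))"
proof (induction d arbitrary: os us)
  case 0 then show ?case by simp
next
  case (Suc d)
  let ?k = "length os"
  let ?u = "a (length us) (last os)"
  have k: "?k < nP M" and dk: "nP M - 1 - ?k = d" using Suc.prems by auto
  have path: "map (\<lambda>j. a j ((os @ [o'])!j)) [0..<?k] = us @ [?u]" for o'
  proof -
    have "map (\<lambda>j. a j ((os @ [o'])!j)) [0..<?k] = map (\<lambda>j. a j ((os @ [o'])!j)) [0..<length us] @ [a (length us) ((os @ [o'])!length us)]"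
    proof -
      have e: "[0..<?k] = [0..<length us] @ [length us]" by (subst Suc.prems(2)[symmetric]) simp
      show ?thesis by (simp only: e map_append list.map)
    qed
    also have "map (\<lambda>j. a j ((os @ [o'])!j)) [0..<length us] = us"
    proof -
      have "map (\<lambda>j. a j ((os @ [o'])!j)) [0..<length us] = map (\<lambda>j. a j (os!j)) [0..<length us]"
        using Suc.prems(2) by (intro map_cong) (auto simp: nth_append)
      then show ?thesis using Suc.prems(3) by (rule trans[OF _ sym])
    qed
    also have "(os @ [o'])!length us = last os"
      using Suc.prems(2) by (cases os rule: rev_cases) (auto simp: nth_append)
    finally show ?thesis .
  qed
  show ?case unfolding spay.simps bst.simps
  proof (rule sum.cong[OF refl])
    fix o' assume "o' \<in> hists s ?k"
    show "trP s os o' * spay M s \<beta> (sa a) d (os @ [o'], us @ [?u]) (sa a ?k (os @ [o'], us @ [?u]))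
        = trP s os o' * Max (bst M s \<beta> d (os @ [o'], us @ [?u]) ` Act M ?k)"
    proof (cases "marg s (Suc ?k) (os @ [o']) = 0")
      case True then show ?thesis by (simp add: trP_def)
    next
      case False
      then obtain xo where xo: "xo \<in> osupp s" and tk: "take (Suc ?k) (snd xo) = os @ [o']"
        using marg_ex by blast
      have L: "length (snd xo) = nP M" using len[OF xo] .
      have "take (Suc ?k) (snd xo) ! ?k = snd xo ! ?k" by simp
      then have ok: "snd xo ! ?k = o'" using tk by simp
      have lh: "lowhists \<zeta> ?k o' = os @ [o']"
        using lowhists_supp[OF xo k] ok tk by simp
      have gr: "betastar M s \<beta> ?k (os @ [o'], us @ [?u]) (a ?k o') = Max (betastar M s \<beta> ?k (os @ [o'], us @ [?u]) ` Act M ?k)"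
      proof -
        have "let nd = (lowhists \<zeta> ?k o', map (\<lambda>j. a j (lowhists \<zeta> ?k o' ! j)) [0..<?k]) in
           a ?k o' \<in> Act M ?k \<and> betastar M s \<beta> ?k nd (a ?k o') = Max (betastar M s \<beta> ?k nd ` Act M ?k)"
          using g k unfolding is_greedy_def by blast
        then show ?thesis unfolding Let_def lh path by simp
      qed
      have "spay M s \<beta> (sa a) d (os @ [o'], us @ [?u]) (a ?k o') = bst M s \<beta> d (os @ [o'], us @ [?u]) (a ?k o')"
      proof -
        have lu: "length (us @ [?u]) = ?k" using Suc.prems(2) by simp
        have pre: "us @ [?u] = map (\<lambda>j. a j ((os @ [o'])!j)) [0..<length (us @ [?u])]"
          using path[of o'] by (simp only: lu)
        have l1: "length (os @ [o']) + d = nP M" using Suc.prems(1) by simp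
        have l2: "length (us @ [?u]) + 1 = length (os @ [o'])" using lu by simp
        have "spay M s \<beta> (sa a) d (os @ [o'], us @ [?u]) (a (length (us @ [?u])) (last (os @ [o'])))
           = bst M s \<beta> d (os @ [o'], us @ [?u]) (a (length (us @ [?u])) (last (os @ [o'])))"
          by (rule Suc.IH[OF l1 l2 pre])
        then show ?thesis unfolding lu by simp
      qed
      then show ?thesis using gr dk by (simp add: sa_def betastar_def)
    qed
  qed
qed

end

theorem theorem1:
  fixes M :: "('x,'u,'z) decpomdp"
    and \<zeta> :: "nat \<Rightarrow> 'z \<Rightarrow> 'u \<times> 'z"
    and \<tau> :: nat
    and s :: "'x \<times> ('u,'z) hist list \<Rightarrow> real"
    and \<beta> :: "'x \<Rightarrow> ('u,'z) hist list \<Rightarrow> 'u list \<Rightarrow> real"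
  assumes "is_decpomdp M"
    and "his M \<zeta>"
    and "\<tau> < horizon M"
    and "reachable_occ M \<tau> s"
  shows
    "(\<forall>i<nP M. \<forall>nd u. node_ok M s i nd \<and> u \<in> Act M i \<longrightarrow>
        (\<forall>\<sigma>. strat_ok M \<sigma> \<longrightarrow> payoff_after M s \<beta> \<sigma> i nd u \<le> betastar M s \<beta> i nd u) \<and>
        (\<exists>\<sigma>. strat_ok M \<sigma> \<and> payoff_after M s \<beta> \<sigma> i nd u = betastar M s \<beta> i nd u))
     \<and>
     (let v = (\<Sum>o1\<in>hists s 0. marg s 1 [o1] * Max (betastar M s \<beta> 0 ([o1], []) ` Act M 0)) in
        (\<exists>\<sigma>. strat_ok M \<sigma> \<and> game_val M s \<beta> \<sigma> = v) \<and>
        (\<forall>\<sigma>. strat_ok M \<sigma> \<longrightarrow> game_val M s \<beta> \<sigma> \<le> v) \<and>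
        (\<exists>a. dr_ok M a \<and> Qbeta M s \<beta> a = v) \<and>
        (\<forall>a. dr_ok M a \<longrightarrow> Qbeta M s \<beta> a \<le> v))
     \<and>
     (\<forall>\<sigma>. strat_ok M \<sigma> \<and> (\<forall>\<sigma>'. strat_ok M \<sigma>' \<longrightarrow> game_val M s \<beta> \<sigma>' \<le> game_val M s \<beta> \<sigma>) \<longrightarrow>
        dr_ok M (rule_of \<zeta> \<sigma>) \<and>
        (\<forall>a. dr_ok M a \<longrightarrow> Qbeta M s \<beta> a \<le> Qbeta M s \<beta> (rule_of \<zeta> \<sigma>)))
     \<and>
     (\<forall>a. is_greedy M s \<beta> \<zeta> a \<longrightarrow>
        dr_ok M a \<and> (\<forall>a'. dr_ok M a' \<longrightarrow> Qbeta M s \<beta> a' \<le> Qbeta M s \<beta> a))"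
proof -
  from assms(4) obtain A where A: "\<forall>t<\<tau>. dr_ok M (A t)" and sdef: "s = occ M A \<tau>"
    unfolding reachable_occ_def by blast
  interpret LL M s \<zeta> \<beta>
  proof
    show "1 \<le> nP M" using assms(1) by (simp add: is_decpomdp_def)
    show "\<And>i. i < nP M \<Longrightarrow> finite (Act M i)" "\<And>i. i < nP M \<Longrightarrow> Act M i \<noteq> {}"
      using assms(1) by (auto simp: is_decpomdp_def)
    show "finite (osupp s)" unfolding sdef by (rule occ_fin[OF assms(1)])
    show "\<And>xo. 0 \<le> s xo" unfolding sdef by (rule occ_nonneg[OF assms(1)])
    have os: "length (snd xo) = nP M \<and> (\<forall>j. 1 \<le> j \<and> j < nP M \<longrightarrow> down \<zeta> j (snd xo ! j) = snd xo ! (j - 1))"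
      if "xo \<in> osupp s" for xo
    proof -
      obtain x oh where xo: "xo = (x, oh)" by (cases xo)
      have "occ M A \<tau> (x, oh) \<noteq> 0" using that xo sdef by (simp add: osupp_def)
      from occ_supp[OF assms(1,2) A this] show ?thesis using xo by simp
    qed
    show "\<And>xo. xo \<in> osupp s \<Longrightarrow> length (snd xo) = nP M" using os by blast
    show "\<And>xo j. xo \<in> osupp s \<Longrightarrow> 1 \<le> j \<Longrightarrow> j < nP M \<Longrightarrow> down \<zeta> j (snd xo ! j) = snd xo ! (j - 1)"
      using os by blast
  qed
  have n1: "1 \<le> nP M" by (rule npos)
  have P1: "\<forall>i<nP M. \<forall>nd u. node_ok M s i nd \<and> u \<in> Act M i \<longrightarrow>
        (\<forall>\<sigma>. strat_ok M \<sigma> \<longrightarrow> payoff_after M s \<beta> \<sigma> i nd u \<le> betastar M s \<beta> i nd u) \<and>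
        (\<exists>\<sigma>. strat_ok M \<sigma> \<and> payoff_after M s \<beta> \<sigma> i nd u = betastar M s \<beta> i nd u)"
  proof (intro allI impI conjI)
    fix i nd u \<sigma> assume i: "i < nP M" and h: "node_ok M s i nd \<and> u \<in> Act M i" and so: "strat_ok M \<sigma>"
    have l: "length (fst nd) + (nP M - 1 - i) = nP M" using h i by (auto simp: node_ok_def)
    show "payoff_after M s \<beta> \<sigma> i nd u \<le> betastar M s \<beta> i nd u"
      unfolding payoff_after_def betastar_def by (rule spay_le[OF so l])
  next
    fix i nd u assume i: "i < nP M" and h: "node_ok M s i nd \<and> u \<in> Act M i"
    have l: "length (fst nd) + (nP M - 1 - i) = nP M" using h i by (auto simp: node_ok_def)
    show "\<exists>\<sigma>. strat_ok M \<sigma> \<and> payoff_after M s \<beta> \<sigma> i nd u = betastar M s \<beta> i nd u"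
      using gs_ok spay_gs[OF l] unfolding payoff_after_def betastar_def by blast
  qed
  define v where "v = (\<Sum>o1\<in>hists s 0. marg s 1 [o1] * Max (betastar M s \<beta> 0 ([o1], []) ` Act M 0))"
  have l0: "length (fst ([o1], [])) + (nP M - 1 - 0) = nP M" for o1 :: "('u,'z) hist"
    using n1 by simp
  have gv_le: "game_val M s \<beta> \<sigma> \<le> v" if so: "strat_ok M \<sigma>" for \<sigma>
    unfolding game_val_def v_def
  proof (rule sum_mono, rule mult_left_mono[OF _ marg_nn])
    fix o1 assume "o1 \<in> hists s 0"
    have "payoff_after M s \<beta> \<sigma> 0 ([o1], []) (\<sigma> 0 ([o1], [])) \<le> betastar M s \<beta> 0 ([o1], []) (\<sigma> 0 ([o1], []))"
      unfolding payoff_after_def betastar_def by (rule spay_le[OF so l0])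
    also have "\<dots> \<le> Max (betastar M s \<beta> 0 ([o1], []) ` Act M 0)"
      using so n1 actf[of 0] unfolding strat_ok_def by (intro Max_ge) auto
    finally show "payoff_after M s \<beta> \<sigma> 0 ([o1], []) (\<sigma> 0 ([o1], [])) \<le> Max (betastar M s \<beta> 0 ([o1], []) ` Act M 0)" .
  qed
  have gv_gs: "game_val M s \<beta> gs = v"
    unfolding game_val_def v_def
  proof (rule sum.cong[OF refl])
    fix o1 assume "o1 \<in> hists s 0"
    have "payoff_after M s \<beta> gs 0 ([o1], []) (gs 0 ([o1], [])) = betastar M s \<beta> 0 ([o1], []) (gs 0 ([o1], []))"
      unfolding payoff_after_def betastar_def by (rule spay_gs[OF l0])
    also have "\<dots> = Max (betastar M s \<beta> 0 ([o1], []) ` Act M 0)"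
      using gs_prop[of 0] n1 unfolding betastar_def by simp
    finally show "marg s 1 [o1] * payoff_after M s \<beta> gs 0 ([o1], []) (gs 0 ([o1], [])) =
        marg s 1 [o1] * Max (betastar M s \<beta> 0 ([o1], []) ` Act M 0)" by simp
  qed
  have Qsa: "Qbeta M s \<beta> a = game_val M s \<beta> (sa a)" for a
    using Qbeta_game[of "sa a"] by (simp add: rule_of_sa[abs_def])
  have Qle: "Qbeta M s \<beta> a \<le> v" if "dr_ok M a" for a
    using Qsa gv_le sa_ok[OF that] by simp
  have P2: "(\<exists>\<sigma>. strat_ok M \<sigma> \<and> game_val M s \<beta> \<sigma> = v) \<and>
        (\<forall>\<sigma>. strat_ok M \<sigma> \<longrightarrow> game_val M s \<beta> \<sigma> \<le> v) \<and>
        (\<exists>a. dr_ok M a \<and> Qbeta M s \<beta> a = v) \<and>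
        (\<forall>a. dr_ok M a \<longrightarrow> Qbeta M s \<beta> a \<le> v)"
    using gs_ok gv_gs gv_le Qle rule_of_ok[OF gs_ok] Qbeta_game[of gs] by blast
  have P3: "\<forall>\<sigma>. strat_ok M \<sigma> \<and> (\<forall>\<sigma>'. strat_ok M \<sigma>' \<longrightarrow> game_val M s \<beta> \<sigma>' \<le> game_val M s \<beta> \<sigma>) \<longrightarrow>
        dr_ok M (rule_of \<zeta> \<sigma>) \<and>
        (\<forall>a. dr_ok M a \<longrightarrow> Qbeta M s \<beta> a \<le> Qbeta M s \<beta> (rule_of \<zeta> \<sigma>))"
  proof (intro allI impI conjI)
    fix \<sigma> a assume h: "strat_ok M \<sigma> \<and> (\<forall>\<sigma>'. strat_ok M \<sigma>' \<longrightarrow> game_val M s \<beta> \<sigma>' \<le> game_val M s \<beta> \<sigma>)"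
    show "dr_ok M (rule_of \<zeta> \<sigma>)" using h rule_of_ok by blast
    assume "dr_ok M a"
    then have "Qbeta M s \<beta> a \<le> v" by (rule Qle)
    also have "v \<le> game_val M s \<beta> \<sigma>" using h gs_ok gv_gs by auto
    also have "\<dots> = Qbeta M s \<beta> (rule_of \<zeta> \<sigma>)" using Qbeta_game by simp
    finally show "Qbeta M s \<beta> a \<le> Qbeta M s \<beta> (rule_of \<zeta> \<sigma>)" .
  qed
  have P4: "\<forall>a. is_greedy M s \<beta> \<zeta> a \<longrightarrow>
        dr_ok M a \<and> (\<forall>a'. dr_ok M a' \<longrightarrow> Qbeta M s \<beta> a' \<le> Qbeta M s \<beta> a)"
  proof (intro allI impI conjI)
    fix a assume g: "is_greedy M s \<beta> \<zeta> a"
    show dra: "dr_ok M a" using g by (auto simp: is_greedy_def dr_ok_def Let_def)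
    have "game_val M s \<beta> (sa a) = v"
      unfolding game_val_def v_def
    proof (rule sum.cong[OF refl])
      fix o1 assume "o1 \<in> hists s 0"
      have "payoff_after M s \<beta> (sa a) 0 ([o1], []) (sa a 0 ([o1], [])) = bst M s \<beta> (nP M - 1 - 0) ([o1], []) (a 0 o1)"
        unfolding payoff_after_def using spay_greedy[OF g, of "[o1]" "nP M - 1 - 0" "[]"] n1
        by (simp add: sa_def)
      also have "\<dots> = Max (betastar M s \<beta> 0 ([o1], []) ` Act M 0)"
      proof -
        have n0: "0 < nP M" using n1 by simp
        have "let nd = (lowhists \<zeta> 0 o1, map (\<lambda>j. a j (lowhists \<zeta> 0 o1 ! j)) [0..<0]) in
           a 0 o1 \<in> Act M 0 \<and> betastar M s \<beta> 0 nd (a 0 o1) = Max (betastar M s \<beta> 0 nd ` Act M 0)"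
          using g n0 unfolding is_greedy_def by blast
        then show ?thesis unfolding Let_def betastar_def by simp
      qed
      finally show "marg s 1 [o1] * payoff_after M s \<beta> (sa a) 0 ([o1], []) (sa a 0 ([o1], [])) =
          marg s 1 [o1] * Max (betastar M s \<beta> 0 ([o1], []) ` Act M 0)" by simp
    qed
    then have qv: "Qbeta M s \<beta> a = v" using Qsa by simp
    fix a' assume "dr_ok M a'"
    then show "Qbeta M s \<beta> a' \<le> Qbeta M s \<beta> a" using Qle qv by simp
  qed
  show ?thesis unfolding Let_def v_def[symmetric] using P1 P2 P3 P4 by blast
qed


end
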